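(* Let $n \geq 3$ and let $\Omega = \bigcap_{m=0}^q \{u_m \leq 0\} \subset \mathbb{R}^n$ be a compact convex polytope with non-empty interior satisfying the standing assumptions described in the context. Then for every $\varepsilon \in (0,1)$ there exists $\delta > 0$ with the following property: if $0 \leq j < k \leq q$ and there exists a point $x \in \Omega$ with $-\delta \leq u_j(x) \leq 0$ and $-\delta \leq u_k(x) \leq 0$, then $\langle N_j, N_k \rangle \leq \varepsilon$.
   Context: Here $u_0,\dots,u_q$ are non-constant linear (affine) functions on $\mathbb{R}^n$ and $\Omega = \bigcap_{m=0}^q\{u_m\le 0\}$ is compact, convex, with non-empty interior. Standing assumptions: (a) for each $k$, the set $\{u_k>0\}\cap\bigcap_{m\neq k}\{u_m\le 0\}$ is non-empty; (b) the Euclidean gradient of each $u_k$ is a unit vector $N_k\in S^{n-1}$; (c) for $0\le j<k\le q$, if there exists $x\in\Omega$ with $u_j(x)=u_k(x)=0$, then $\langle N_j,N_k\rangle\le 0$ (Euclidean inner product). *)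

theory Defs
  imports "HOL-Analysis.Analysis"
begin

end

theory Submission
  imports Defs
begin

lemma finite_min_delta:
  assumes "finite P"
  shows "(\<forall>p\<in>P. \<exists>d>0. Q p d) \<Longrightarrow> (\<And>p d d'. Q p d \<Longrightarrow> 0 < d' \<Longrightarrow> d' \<le> d \<Longrightarrow> Q p d')
     \<Longrightarrow> \<exists>d>(0::real). \<forall>p\<in>P. Q p d"
  using assms
proof (induction P rule: finite_induct)
  case empty
  then show ?case by (auto intro: exI[of _ 1])
next
  case (insert a F)
  then obtain d1 where d1: "d1 > 0" "\<forall>p\<in>F. Q p d1" by auto
  from insert obtain d2 where d2: "d2 > 0" "Q a d2" by auto
  show ?case
    apply (rule exI[of _ "min d1 d2"])
    using d1 d2 insert.prems(2) by auto
qed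

lemma pair_delta:
  fixes f g :: "real^'n \<Rightarrow> real" and \<Omega> :: "(real^'n) set"
  assumes "compact \<Omega>" and "continuous_on \<Omega> f" and "continuous_on \<Omega> g"
    and "\<forall>x\<in>\<Omega>. f x \<le> 0 \<and> g x \<le> 0 \<and> \<not>(f x = 0 \<and> g x = 0)"
  shows "\<exists>d>0. \<forall>x\<in>\<Omega>. \<not>(-d \<le> f x \<and> f x \<le> 0 \<and> -d \<le> g x \<and> g x \<le> 0)"
proof (cases "\<Omega> = {}")
  case True
  then show ?thesis by (auto intro: exI[of _ 1])
next
  case False
  let ?h = "\<lambda>x. max (- f x) (- g x)"
  have "continuous_on \<Omega> ?h"
    using assms(2,3) by (intro continuous_intros)
  then obtain x0 where x0: "x0 \<in> \<Omega>" "\<And>x. x \<in> \<Omega> \<Longrightarrow> ?h x0 \<le> ?h x"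
    using continuous_attains_inf[OF assms(1) False] by blast
  have "f x0 \<le> 0" "g x0 \<le> 0" "\<not>(f x0 = 0 \<and> g x0 = 0)" using assms(4) x0(1) by auto
  then have pos: "?h x0 > 0" by linarith
  show ?thesis
  proof (rule exI[of _ "?h x0 / 2"], intro conjI ballI)
    show "?h x0 / 2 > 0" using pos by simp
    fix x assume "x \<in> \<Omega>"
    then have "?h x0 \<le> ?h x" by (rule x0(2))
    then show "\<not>(- (?h x0 / 2) \<le> f x \<and> f x \<le> 0 \<and> - (?h x0 / 2) \<le> g x \<and> g x \<le> 0)"
      using pos by auto
  qed
qed

theorem lemma2p2:
  fixes u :: "nat \<Rightarrow> real^'n \<Rightarrow> real"
    and N :: "nat \<Rightarrow> real^'n"
    and q :: nat
    and \<Omega> :: "(real^'n) set"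
  assumes dim: "CARD('n) \<ge> 3"
    and affine: "\<And>k x. k \<le> q \<Longrightarrow> u k x = N k \<bullet> x + u k 0"
    and unit: "\<And>k. k \<le> q \<Longrightarrow> norm (N k) = 1"
    and Omega_def: "\<Omega> = {x. \<forall>m\<le>q. u m x \<le> 0}"
    and compact: "compact \<Omega>"
    and convex: "convex \<Omega>"
    and interior: "interior \<Omega> \<noteq> {}"
    and nonred: "\<And>k. k \<le> q \<Longrightarrow> \<exists>x. u k x > 0 \<and> (\<forall>m\<le>q. m \<noteq> k \<longrightarrow> u m x \<le> 0)"
    and angle: "\<And>j k. j < k \<Longrightarrow> k \<le> q \<Longrightarrow> (\<exists>x\<in>\<Omega>. u j x = 0 \<and> u k x = 0) \<Longrightarrow> N j \<bullet> N k \<le> 0"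
  shows "\<forall>\<epsilon>. 0 < \<epsilon> \<and> \<epsilon> < 1 \<longrightarrow>
           (\<exists>\<delta>>0. \<forall>j k. j < k \<and> k \<le> q \<and>
               (\<exists>x\<in>\<Omega>. -\<delta> \<le> u j x \<and> u j x \<le> 0 \<and> -\<delta> \<le> u k x \<and> u k x \<le> 0)
               \<longrightarrow> N j \<bullet> N k \<le> \<epsilon>)"
proof (intro allI impI)
  fix \<epsilon> :: real assume e: "0 < \<epsilon> \<and> \<epsilon> < 1"
  define P where "P = {(j,k). j < k \<and> k \<le> q \<and> N j \<bullet> N k > \<epsilon>}"
  define Q where "Q = (\<lambda>(p::nat\<times>nat) d. \<forall>x\<in>\<Omega>. \<not>(-d \<le> u (fst p) x \<and> u (fst p) x \<le> 0 \<and> -d \<le> u (snd p) x \<and> u (snd p) x \<le> 0))"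
  have finP: "finite P"
    by (rule finite_subset[of _ "{..q} \<times> {..q}"]) (auto simp: P_def)
  have cont: "continuous_on \<Omega> (u k)" if "k \<le> q" for k
  proof -
    have "u k = (\<lambda>x. N k \<bullet> x + u k 0)" by (rule ext) (rule affine[OF that])
    moreover have "continuous_on \<Omega> (\<lambda>x. N k \<bullet> x + u k 0)" by (intro continuous_intros)
    ultimately show ?thesis by metis
  qed
  have "\<forall>p\<in>P. \<exists>d>0. Q p d"
  proof
    fix p assume "p \<in> P"
    then obtain j k where p: "p = (j,k)" "j < k" "k \<le> q" "N j \<bullet> N k > \<epsilon>"
      by (auto simp: P_def)
    have nz: "\<not>(\<exists>x\<in>\<Omega>. u j x = 0 \<and> u k x = 0)"
    proof
      assume "\<exists>x\<in>\<Omega>. u j x = 0 \<and> u k x = 0"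
      then have "N j \<bullet> N k \<le> 0" by (rule angle[OF p(2,3)])
      then show False using p(4) e by linarith
    qed
    have sgn: "\<forall>x\<in>\<Omega>. u j x \<le> 0 \<and> u k x \<le> 0"
      using p(3) p(2) unfolding Omega_def by auto
    have "\<exists>d>0. \<forall>x\<in>\<Omega>. \<not>(-d \<le> u j x \<and> u j x \<le> 0 \<and> -d \<le> u k x \<and> u k x \<le> 0)"
      apply (rule pair_delta[OF compact cont cont])
      using sgn nz p(2,3) by auto
    then show "\<exists>d>0. Q p d" by (simp add: Q_def p)
  qed
  moreover have "\<And>p d d'. Q p d \<Longrightarrow> 0 < d' \<Longrightarrow> d' \<le> d \<Longrightarrow> Q p d'"
    unfolding Q_def by (smt (verit))
  ultimately obtain d where d: "d > 0" "\<forall>p\<in>P. Q p d"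
    using finite_min_delta[OF finP] by blast
  show "\<exists>\<delta>>0. \<forall>j k. j < k \<and> k \<le> q \<and>
               (\<exists>x\<in>\<Omega>. -\<delta> \<le> u j x \<and> u j x \<le> 0 \<and> -\<delta> \<le> u k x \<and> u k x \<le> 0)
               \<longrightarrow> N j \<bullet> N k \<le> \<epsilon>"
  proof (rule exI[of _ d], intro conjI allI impI)
    show "d > 0" by (rule d(1))
    fix j k assume h: "j < k \<and> k \<le> q \<and>
               (\<exists>x\<in>\<Omega>. -d \<le> u j x \<and> u j x \<le> 0 \<and> -d \<le> u k x \<and> u k x \<le> 0)"
    show "N j \<bullet> N k \<le> \<epsilon>"
    proof (rule ccontr)
      assume "\<not> N j \<bullet> N k \<le> \<epsilon>"
      then have "(j,k) \<in> P" using h by (auto simp: P_def)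
      then have "Q (j,k) d" using d by blast
      then show False using h by (auto simp: Q_def)
    qed
  qed
qed

end
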